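(* Let $f,g$ be entire functions of finite order satisfying $ff^\natural=gg^\natural$ and $f'(f')^\natural=g'(g')^\natural$ on $\mathbb C$. Then there is $\alpha\in\mathbb C$ with $|\alpha|=1$ such that $f=\alpha g$ or $f=\alpha g^\natural$.
   Context: For an entire function $h$, its involution is $h^\natural(z):=\overline{h(-\bar z)}$. An entire function $h$ has finite order if $\limsup_{r\to\infty}\frac{\log\log M_h(r)}{\log r}<\infty$, where $M_h(r)=\max_{|z|=r}|h(z)|$. *)

theory Defs
  imports "HOL-Complex_Analysis.Complex_Analysis" "HOL-Library.Liminf_Limsup"
begin

definition involution :: "(complex \<Rightarrow> complex) \<Rightarrow> complex \<Rightarrow> complex" where
  "involution h = (\<lambda>z. cnj (h (- cnj z)))"

definition max_modulus :: "(complex \<Rightarrow> complex) \<Rightarrow> real \<Rightarrow> real" where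
  "max_modulus h r = (SUP z\<in>sphere 0 r. norm (h z))"

definition finite_order :: "(complex \<Rightarrow> complex) \<Rightarrow> bool" where
  "finite_order h \<longleftrightarrow>
     Limsup at_top (\<lambda>r::real. ereal (ln (ln (max_modulus h r)) / ln r)) < \<infinity>"

end

theory Submission
  imports Defs
begin

lemma inv_deriv:
  assumes "h holomorphic_on UNIV"
  shows "(involution h has_field_derivative (- involution (deriv h) z)) (at z)"
proof -
  define k where "k = (\<lambda>w. h (- w))"
  have hd: "\<And>w. (h has_field_derivative deriv h w) (at w)"
    using assms by (meson DERIV_deriv_iff_field_differentiable UNIV_I holomorphic_on_def
        at_within_open open_UNIV field_differentiable_within_open)
  have "(k has_field_derivative (- deriv h (- cnj z))) (at (cnj z))"
  proof -
    have u: "(uminus has_field_derivative -1) (at (cnj z))" using DERIV_minus[OF DERIV_ident] by blast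
    show ?thesis
      unfolding k_def using DERIV_chain2[where f=h and g=uminus and x="cnj z" and Db="-1" and s=UNIV, OF hd[of "- cnj z"] u]
      by simp
  qed
  from has_field_derivative_cnj_cnj[OF this]
  have "((cnj \<circ> k \<circ> cnj) has_field_derivative cnj (- deriv h (- cnj z))) (at z)" .
  moreover have "cnj \<circ> k \<circ> cnj = involution h"
    by (auto simp: k_def involution_def)
  ultimately show ?thesis by (simp add: involution_def)
qed

lemma inv_hol:
  assumes "h holomorphic_on UNIV"
  shows "involution h holomorphic_on UNIV"
  using inv_deriv[OF assms] 
  by (meson field_differentiable_def holomorphic_on_def field_differentiable_at_within)

lemma inv_deriv_eq:
  assumes "h holomorphic_on UNIV"
  shows "deriv (involution h) z = - involution (deriv h) z"
  using inv_deriv[OF assms] DERIV_imp_deriv by blast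

lemma inv_inv: "involution (involution h) = h"
  by (auto simp: involution_def)

lemma prod_zero:
  assumes "p holomorphic_on UNIV" "q holomorphic_on UNIV" "\<And>z. p z * q z = 0"
  shows "(\<forall>z. p z = 0) \<or> (\<forall>z. q z = 0)"
proof (rule ccontr)
  assume "\<not> ?thesis"
  then obtain z0 where z0: "p z0 \<noteq> 0" and nq: "\<exists>w. q w \<noteq> 0" by auto
  have "continuous_on UNIV p" using assms(1) holomorphic_on_imp_continuous_on by blast
  then have "isCont p z0" by (simp add: continuous_on_eq_continuous_at)
  then obtain r where r: "r > 0" "\<And>y. y \<in> ball z0 r \<Longrightarrow> p y \<noteq> 0"
    using continuous_at_avoid[of z0 p 0] z0 by (auto simp: dist_commute ball_def)
  have "q w = 0" for w
    apply (rule analytic_continuation[OF assms(2) open_UNIV connected_UNIV subset_UNIV, of z0 "ball z0 r"])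
    using r assms(3) by (auto simp: islimpt_ball mult_eq_0_iff)
  with nq show False by auto
qed

lemma proportional:
  assumes "p holomorphic_on UNIV" "q holomorphic_on UNIV" "p z0 \<noteq> 0"
    and "\<And>z. deriv p z * q z = p z * deriv q z"
  shows "\<exists>c. \<forall>z. q z = c * p z"
proof -
  have "continuous_on UNIV p" using assms(1) holomorphic_on_imp_continuous_on by blast
  then have "isCont p z0" by (simp add: continuous_on_eq_continuous_at)
  then obtain r where r: "r > 0" "\<And>y. y \<in> ball z0 r \<Longrightarrow> p y \<noteq> 0"
    using continuous_at_avoid[of z0 p 0] assms(3) by (auto simp: dist_commute ball_def)
  have pd: "\<And>w. (p has_field_derivative deriv p w) (at w)"
    using assms(1) by (meson DERIV_deriv_iff_field_differentiable UNIV_I holomorphic_on_def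
        at_within_open open_UNIV field_differentiable_within_open)
  have qd: "\<And>w. (q has_field_derivative deriv q w) (at w)"
    using assms(2) by (meson DERIV_deriv_iff_field_differentiable UNIV_I holomorphic_on_def
        at_within_open open_UNIV field_differentiable_within_open)
  have "\<exists>c. \<forall>x\<in>ball z0 r. q x / p x = c"
  proof (rule has_field_derivative_zero_constant)
    fix x assume x: "x \<in> ball z0 r"
    have "((\<lambda>x. q x / p x) has_field_derivative
        (deriv q x * p x - q x * deriv p x) / (p x * p x)) (at x)"
      using DERIV_divide[OF qd pd r(2)[OF x]] by simp
    moreover have "deriv q x * p x - q x * deriv p x = 0"
      using assms(4)[of x] by (simp add: algebra_simps)
    ultimately show "((\<lambda>x. q x / p x) has_field_derivative 0) (at x within ball z0 r)"
      by (simp add: has_field_derivative_at_within)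
  qed auto
  then obtain c where c: "\<And>x. x \<in> ball z0 r \<Longrightarrow> q x / p x = c" by blast
  have "q w - c * p w = 0" for w
  proof (rule analytic_continuation[OF _ open_UNIV connected_UNIV subset_UNIV, of "\<lambda>w. q w - c * p w" z0 "ball z0 r"])
    show "(\<lambda>w. q w - c * p w) holomorphic_on UNIV"
      using assms(1,2) by (auto intro!: holomorphic_intros)
    show "z0 islimpt ball z0 r" using r by (simp add: islimpt_ball)
    fix z assume "z \<in> ball z0 r" then show "q z - c * p z = 0"
      using c[of z] r(2)[of z] by (simp add: field_simps)
  qed auto
  then show ?thesis by auto
qed

theorem lemma3p3:
  fixes f g :: "complex \<Rightarrow> complex"
  assumes "f holomorphic_on UNIV" and "g holomorphic_on UNIV"
    and "finite_order f" and "finite_order g"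
    and "\<And>z. f z * involution f z = g z * involution g z"
    and "\<And>z. deriv f z * involution (deriv f) z = deriv g z * involution (deriv g) z"
  shows "\<exists>\<alpha>::complex. norm \<alpha> = 1 \<and>
           ((\<forall>z. f z = \<alpha> * g z) \<or> (\<forall>z. f z = \<alpha> * involution g z))"
proof -
  define F where "F = involution f"
  define G where "G = involution g"
  have hF: "F holomorphic_on UNIV" using inv_hol[OF assms(1)] F_def by simp
  have hG: "G holomorphic_on UNIV" using inv_hol[OF assms(2)] G_def by simp
  have zinv: "(\<forall>z. involution h z = 0) \<Longrightarrow> (\<forall>z. h z = 0)" for h :: "complex \<Rightarrow> complex"
  proof (intro allI)
    fix w assume "\<forall>z. involution h z = 0"
    then have "involution h (- cnj w) = 0" by blast
    then show "h w = 0" by (simp add: involution_def)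
  qed
  have norm1: "norm c = 1" if "c * cnj c = 1" for c :: complex
  proof -
    have "complex_of_real ((norm c)^2) = 1" using that complex_norm_square by metis
    then have "(norm c)^2 = 1" by (metis of_real_eq_1_iff)
    then show ?thesis using norm_ge_zero[of c] by (auto simp: power2_eq_1_iff)
  qed
  show ?thesis
  proof (cases "\<forall>z. f z = 0")
    case True
    then have "\<And>z. g z * G z = 0" using assms(5) unfolding G_def by (metis mult_zero_left)
    from prod_zero[OF assms(2) hG this] have "\<forall>z. g z = 0"
      using zinv G_def by blast
    with True show ?thesis by (intro exI[of _ 1]) auto
  next
    case False
    then obtain z0 where z0: "f z0 \<noteq> 0" by blast
    have "\<not> (\<forall>z. f z * F z = 0)"
    proof
      assume "\<forall>z. f z * F z = 0"
      from prod_zero[OF assms(1) hF] this have "(\<forall>z. f z = 0) \<or> (\<forall>z. F z = 0)" by blast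
      then show False using zinv F_def False by blast
    qed
    then obtain z1 where z1: "f z1 * F z1 \<noteq> 0" by blast
    have hd: "\<And>h w. h holomorphic_on UNIV \<Longrightarrow> (h has_field_derivative deriv h w) (at w)"
      by (meson DERIV_deriv_iff_field_differentiable UNIV_I holomorphic_on_def
        at_within_open open_UNIV field_differentiable_within_open)
    have eqfun: "(\<lambda>z. f z * F z) = (\<lambda>z. g z * G z)" using assms(5) F_def G_def by auto
    have D1: "deriv f z * F z + f z * deriv F z = deriv g z * G z + g z * deriv G z" for z
    proof -
      have a: "((\<lambda>z. f z * F z) has_field_derivative deriv f z * F z + f z * deriv F z) (at z)"
        using DERIV_mult[OF hd[OF assms(1)] hd[OF hF]] by (simp add: algebra_simps)
      have b: "((\<lambda>z. g z * G z) has_field_derivative deriv g z * G z + g z * deriv G z) (at z)"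
        using DERIV_mult[OF hd[OF assms(2)] hd[OF hG]] by (simp add: algebra_simps)
      from a b eqfun show ?thesis using DERIV_unique by metis
    qed
    have D2: "deriv f z * deriv F z = deriv g z * deriv G z" for z
      using assms(6)[of z] inv_deriv_eq[OF assms(1), of z] inv_deriv_eq[OF assms(2), of z]
      F_def G_def by simp
    define E1 where "E1 = (\<lambda>z. deriv f z * g z - f z * deriv g z)"
    define E2 where "E2 = (\<lambda>z. deriv f z * G z - f z * deriv G z)"
    have hdf: "deriv f holomorphic_on UNIV" "deriv g holomorphic_on UNIV" "deriv G holomorphic_on UNIV"
      using holomorphic_deriv[OF _ open_UNIV] assms(1,2) hG by auto
    have hE1: "E1 holomorphic_on UNIV" unfolding E1_def
      using hdf assms(1,2) by (intro holomorphic_intros) auto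
    have hE2: "E2 holomorphic_on UNIV" unfolding E2_def
      using hdf assms(1,2) hG by (intro holomorphic_intros) auto
    have "E1 z * E2 z = 0" for z
    proof -
      have id: "E1 z * E2 z = (deriv f z)^2 * (g z * G z - f z * F z)
         - f z * deriv f z * (deriv g z * G z + g z * deriv G z - deriv f z * F z - f z * deriv F z)
         + (f z)^2 * (deriv g z * deriv G z - deriv f z * deriv F z)"
        unfolding E1_def E2_def by (simp add: algebra_simps power2_eq_square)
      have e1: "g z * G z - f z * F z = 0" using assms(5)[of z] F_def G_def by simp
      have e2: "deriv g z * G z + g z * deriv G z - deriv f z * F z - f z * deriv F z = 0"
        using D1[of z] by (simp add: algebra_simps)
      have e3: "deriv g z * deriv G z - deriv f z * deriv F z = 0" using D2[of z] by simp
      show ?thesis unfolding id e1 e2 e3 by simp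
    qed
    from prod_zero[OF hE1 hE2 this] show ?thesis
    proof
      assume "\<forall>z. E1 z = 0"
      then have "\<And>z. deriv f z * g z = f z * deriv g z" unfolding E1_def by auto
      from proportional[OF assms(1,2) z0 this] obtain c where c: "\<And>z. g z = c * f z" by blast
      have Gc: "G z = cnj c * F z" for z unfolding G_def F_def involution_def using c by simp
      have "f z1 * F z1 = (c * cnj c) * (f z1 * F z1)" using assms(5)[of z1] c[of z1] Gc[of z1]
        F_def G_def by (auto simp: algebra_simps)
      then have cc: "c * cnj c = 1" using z1 by simp
      show ?thesis
      proof (intro exI[of _ "cnj c"] conjI disjI1 allI)
        show "norm (cnj c) = 1" using norm1[OF cc] by simp
        fix z show "f z = cnj c * g z" using c[of z] cc by (simp add: algebra_simps)
      qed
    next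
      assume "\<forall>z. E2 z = 0"
      then have "\<And>z. deriv f z * G z = f z * deriv G z" unfolding E2_def by auto
      from proportional[OF assms(1) hG z0 this] obtain c where c: "\<And>z. G z = c * f z" by blast
      have gc: "g z = cnj c * F z" for z
      proof -
        have "g z = involution G z" using inv_inv G_def by metis
        also have "\<dots> = cnj c * F z" unfolding involution_def F_def using c by simp
        finally show ?thesis .
      qed
      have "f z1 * F z1 = (c * cnj c) * (f z1 * F z1)" using assms(5)[of z1] c[of z1] gc[of z1]
        F_def G_def by (auto simp: algebra_simps)
      then have cc: "c * cnj c = 1" using z1 by simp
      show ?thesis
      proof (intro exI[of _ "cnj c"] conjI disjI2 allI)
        show "norm (cnj c) = 1" using norm1[OF cc] by simp
        fix z show "f z = cnj c * involution g z" using c[of z] cc G_def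
          by (simp add: algebra_simps)
      qed
    qed
  qed
qed

end
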